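(* Let $\zeta>0$ and $1\le k<d$, and let $\alpha_1\ge\cdots\ge\alpha_k>\zeta\ge\alpha_{k+1}\ge\cdots\ge\alpha_d\ge0$. Let $\beta_1,\dots,\beta_d$ be a permutation of $\alpha_1,\dots,\alpha_d$. Define $\alpha'_i=\alpha_i$ for $i\le k$ and $\alpha'_{k+1}=\zeta$, and let $L=\min\{k,\ln(\alpha_1/\zeta)\}$. Then \[ \sum_{i=1}^d(\sqrt{\alpha_i}-\sqrt{\beta_i})^2\le4\sum_{j=1}^k\frac{\alpha'_j-\alpha'_{j+1}}{\alpha'_j}\sum_{i=1}^j(\alpha_i-\beta_i)+d\zeta+8kL\zeta. \] *)

theory Defs
  imports "HOL-Analysis.Analysis"
begin

end

theory Submission
  imports Defs "HOL-Analysis.Analysis"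
begin

lemma sq_le_a: fixes a x :: real assumes "0 \<le> x" "x \<le> a"
  shows "(sqrt a - sqrt x)^2 \<le> a"
proof -
  have "sqrt x \<le> sqrt a" using assms by simp
  have "sqrt x * sqrt x \<le> sqrt a * sqrt x" by (rule mult_right_mono) (use \<open>sqrt x \<le> sqrt a\<close> assms in auto)
  moreover have "sqrt x * sqrt x = x" using assms by simp
  ultimately have "x \<le> sqrt a * sqrt x" by linarith
  have eq: "(sqrt a - sqrt x)^2 = a - 2 * (sqrt a * sqrt x) + x" using assms
    by (simp add: power2_eq_square algebra_simps)
  show ?thesis unfolding eq using \<open>x \<le> sqrt a * sqrt x\<close> assms by linarith
qed

lemma sq_le_max: fixes a x :: real assumes "0 \<le> x" "0 \<le> a"
  shows "(sqrt a - sqrt x)^2 \<le> max a x"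
proof (cases "x \<le> a")
  case True then show ?thesis using sq_le_a[OF assms(1) True] by simp
next
  case False then have "(sqrt x - sqrt a)^2 \<le> x" using sq_le_a[OF assms(2)] by simp
  then show ?thesis by (simp add: power2_commute)
qed

lemma sq_le_quot: fixes a x :: real assumes "0 \<le> x" "0 < a"
  shows "(sqrt a - sqrt x)^2 \<le> (a - x)^2 / a"
proof -
  have e: "(sqrt a - sqrt x)^2 * (sqrt a + sqrt x)^2 = (a - x)^2" using assms
    by (simp add: power_mult_distrib[symmetric] algebra_simps power2_eq_square)
  have "a \<le> (sqrt a + sqrt x)^2" using assms by (simp add: power2_eq_square algebra_simps)
  hence "(sqrt a - sqrt x)^2 * a \<le> (a - x)^2" using e
    by (metis mult_left_mono zero_le_power2)
  thus ?thesis using assms by (simp add: field_simps)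
qed

lemma telesc: fixes F :: "nat \<Rightarrow> real" shows "m \<le> n + 1 \<Longrightarrow> (\<Sum>j=m..n. F j - F (j+1)) = F m - F (n+1)"
proof (induction n)
  case 0 then show ?case by (cases m) auto
next
  case (Suc n) show ?case
  proof (cases "m \<le> n+1")
    case True then show ?thesis using Suc by (simp add: sum.cl_ivl_Suc)
  next
    case False then have "m = Suc (Suc n)" using Suc.prems by simp
    then show ?thesis by simp
  qed
qed


lemma alg1: fixes p q a x :: real
  assumes "0 < q" "q \<le> p" "p \<le> a"
  shows "((max 0 (p - x))^2 - (max 0 (q - x))^2) / (2*a) \<le> (p - q) / p * max 0 (p - x)"
proof -
  define u where "u = max 0 (p - x)"
  define u' where "u' = max 0 (q - x)"
  have u: "0 \<le> u'" "u' \<le> u" "u - u' \<le> p - q" "0 \<le> u" using assms by (auto simp: u_def u'_def)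
  have "u^2 - u'^2 = (u - u') * (u + u')" by (simp add: power2_eq_square algebra_simps)
  also have "\<dots> \<le> (p - q) * (2 * u)" using u by (intro mult_mono) auto
  finally have 1: "u^2 - u'^2 \<le> (p - q) * (2 * u)" .
  have a: "0 < a" "0 < p" using assms by auto
  have "(u^2 - u'^2) / (2*a) \<le> (p - q) * (2 * u) / (2 * a)"
    using 1 a by (intro divide_right_mono) auto
  also have "\<dots> = (p - q) * u / a" by simp
  also have "\<dots> \<le> (p - q) * u / p"
    using a assms u by (intro divide_left_mono mult_nonneg_nonneg) auto
  finally show ?thesis unfolding u_def u'_def by simp
qed

lemma alg2: fixes p q x :: real
  assumes "0 < q" "q \<le> p" "0 < x"
  shows "((max 0 (x - q))^2 - (max 0 (x - p))^2) / (2*x) \<le> (p - q) / p * max 0 (x - q)"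
proof (cases "p \<le> x")
  case True
  define v where "v = x - p"
  define v' where "v' = x - q"
  have e: "max 0 (x - q) = v'" "max 0 (x - p) = v" using True assms by (auto simp: v_def v'_def)
  have v: "0 \<le> v" "v \<le> v'" "v' - v = p - q" using assms True by (auto simp: v_def v'_def)
  have "v'^2 - v^2 = (v' - v) * (v' + v)" by (simp add: power2_eq_square algebra_simps)
  also have "\<dots> \<le> (p - q) * (2 * v')" using v by (intro mult_mono) auto
  finally have 1: "v'^2 - v^2 \<le> (p - q) * (2 * v')" .
  have "(v'^2 - v^2) / (2*x) \<le> (p - q) * (2 * v') / (2 * x)"
    using 1 assms by (intro divide_right_mono) auto
  also have "\<dots> = (p - q) * v' / x" by simp
  also have "\<dots> \<le> (p - q) * v' / p"
    using assms v True by (intro divide_left_mono mult_nonneg_nonneg) auto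
  finally show ?thesis unfolding e by simp
next
  case False
  have e0: "max 0 (x - p) = 0" using False by simp
  show ?thesis
  proof (cases "q < x")
    case True
    define v' where "v' = x - q"
    have e: "max 0 (x - q) = v'" using True by (simp add: v'_def)
    have vp: "0 < v'" using True by (simp add: v'_def)
    have r: "v' / x \<le> (p - q) / p"
    proof -
      have "q / p \<le> q / x" using assms False by (intro divide_left_mono) auto
      moreover have "v' / x = 1 - q / x" using assms by (simp add: v'_def field_simps)
      moreover have "(p - q) / p = 1 - q / p" using assms by (simp add: field_simps)
      ultimately show ?thesis by linarith
    qed
    have "v'^2 / (2 * x) \<le> v'^2 / x" using assms vp by (simp add: divide_left_mono)
    also have "\<dots> = v' * (v' / x)" by (simp add: power2_eq_square)
    also have "\<dots> \<le> v' * ((p - q) / p)" using r vp by (intro mult_left_mono) auto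
    finally show ?thesis unfolding e e0 by (simp add: mult.commute)
  next
    case False
    hence "max 0 (x - q) = 0" by simp
    thus ?thesis using e0 by simp
  qed
qed

locale thm16 =
  fixes \<zeta> :: real and k d :: nat and \<alpha> \<beta> :: "nat \<Rightarrow> real" and \<sigma> :: "nat \<Rightarrow> nat"
  assumes zpos: "\<zeta> > 0" and k1: "1 \<le> k" and kd: "k < d"
    and mono: "\<And>i j. 1 \<le> i \<Longrightarrow> i \<le> j \<Longrightarrow> j \<le> d \<Longrightarrow> \<alpha> j \<le> \<alpha> i"
    and ak: "\<alpha> k > \<zeta>" and ak1: "\<zeta> \<ge> \<alpha> (k + 1)" and ad: "\<alpha> d \<ge> 0"
    and perm: "\<sigma> permutes {1..d}" and beta: "\<And>i. \<beta> i = \<alpha> (\<sigma> i)"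
begin

definition ap where "ap j = (if j \<le> k then \<alpha> j else \<zeta>)"
definition c where "c j = (ap j - ap (j+1)) / ap j"
definition L where "L = min (real k) (ln (\<alpha> 1 / \<zeta>))"
definition h where "h j t i = (if i \<le> j then max 0 (t - \<beta> i) else max 0 (\<beta> i - t))"
definition P where "P i = (\<Sum>j=1..k. 2 * c j * (h j (\<alpha> j) i + h j (ap (j+1)) i))"

lemma a_nonneg: "1 \<le> i \<Longrightarrow> i \<le> d \<Longrightarrow> 0 \<le> \<alpha> i"
  using mono[of i d] ad by simp

lemma a_gt: "1 \<le> i \<Longrightarrow> i \<le> k \<Longrightarrow> \<zeta> < \<alpha> i"
  using mono[of i k] ak kd by simp

lemma a_le: "k < i \<Longrightarrow> i \<le> d \<Longrightarrow> \<alpha> i \<le> \<zeta>"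
  using mono[of "k+1" i] ak1 by simp

lemma a_gt_iff: "1 \<le> i \<Longrightarrow> i \<le> d \<Longrightarrow> (\<zeta> < \<alpha> i) = (i \<le> k)"
  using a_gt a_le by (meson not_le)

lemma sig_in: "i \<in> {1..d} \<Longrightarrow> \<sigma> i \<in> {1..d}"
  using permutes_in_image[OF perm] by blast

lemma b_nonneg: "1 \<le> i \<Longrightarrow> i \<le> d \<Longrightarrow> 0 \<le> \<beta> i"
  using sig_in[of i] a_nonneg[of "\<sigma> i"] beta by auto

lemma b_le: "1 \<le> i \<Longrightarrow> i \<le> d \<Longrightarrow> \<beta> i \<le> \<alpha> 1"
  using sig_in[of i] mono[of 1 "\<sigma> i"] beta by auto

lemma perm_sum: "(\<Sum>i=1..d. g (\<beta> i)) = (\<Sum>i=1..d. g (\<alpha> i))"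
proof -
  have "(\<Sum>i=1..d. g (\<alpha> i)) = (\<Sum>i=1..d. ((\<lambda>i. g (\<alpha> i)) \<circ> \<sigma>) i)"
    by (rule sum.permute[OF perm])
  then show ?thesis by (simp add: beta)
qed

lemma ap_pos: "1 \<le> j \<Longrightarrow> 0 < ap j"
  using a_gt[of j] zpos by (auto simp: ap_def)

lemma ap_mono: "1 \<le> j \<Longrightarrow> ap (j+1) \<le> ap j"
  using mono[of j "j+1"] kd a_gt[of j] by (auto simp: ap_def)

lemma c_nonneg: "1 \<le> j \<Longrightarrow> 0 \<le> c j"
  using ap_pos[of j] ap_mono[of j] by (simp add: c_def)

lemma c_le1: "1 \<le> j \<Longrightarrow> c j \<le> 1"
  using ap_pos[of j] ap_pos[of "j+1"] by (simp add: c_def divide_le_eq_1)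

lemma c_le_ln: "1 \<le> j \<Longrightarrow> c j \<le> ln (ap j) - ln (ap (j+1))"
proof -
  assume j: "1 \<le> j"
  have p: "0 < ap j" "0 < ap (j+1)" using ap_pos j by auto
  have "ln (ap (j+1) / ap j) \<le> ap (j+1) / ap j - 1" using p by (intro ln_le_minus_one) simp
  moreover have "ln (ap (j+1) / ap j) = ln (ap (j+1)) - ln (ap j)" using p by (simp add: ln_div)
  moreover have "c j = 1 - ap (j+1) / ap j" using p by (simp add: c_def field_simps)
  ultimately show ?thesis by linarith
qed

lemma L_nonneg: "0 \<le> L"
proof -
  have "\<alpha> k \<le> \<alpha> 1" using mono[of 1 k] k1 kd by simp
  hence "1 < \<alpha> 1 / \<zeta>" using ak zpos by simp
  hence "0 < ln (\<alpha> 1 / \<zeta>)" by simp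
  thus ?thesis using k1 by (simp add: L_def)
qed

lemma sum_c_le_L: "(\<Sum>j=1..k. c j) \<le> L"
proof -
  have "(\<Sum>j=1..k. c j) \<le> (\<Sum>j=1..k. 1)" by (intro sum_mono c_le1) simp
  hence 1: "(\<Sum>j=1..k. c j) \<le> real k" by simp
  have "(\<Sum>j=1..k. c j) \<le> (\<Sum>j=1..k. ln (ap j) - ln (ap (j+1)))" by (intro sum_mono c_le_ln) simp
  also have "\<dots> = ln (ap 1) - ln (ap (k+1))" by (rule telesc) simp
  also have "\<dots> = ln (\<alpha> 1 / \<zeta>)" using k1 a_gt[of 1] zpos by (simp add: ap_def ln_div)
  finally show ?thesis using 1 by (simp add: L_def)
qed

lemma sum_c_sub_le_L: "1 \<le> i \<Longrightarrow> (\<Sum>j=i..k. c j) \<le> L"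
proof -
  assume i: "1 \<le> i"
  have "(\<Sum>j=i..k. c j) \<le> (\<Sum>j=1..k. c j)"
    by (rule sum_mono2) (use i c_nonneg in auto)
  thus ?thesis using sum_c_le_L by linarith
qed

lemma split_d: assumes "j \<le> d" shows "(\<Sum>i=1..d. f i) = (\<Sum>i=1..j. f i) + (\<Sum>i=j+1..d. (f i :: real))"
proof -
  have "{1..d} = {1..j} \<union> {j+1..d}" using assms by auto
  moreover have "{1..j} \<inter> {j+1..d} = {}" by auto
  ultimately show ?thesis by (simp add: sum.union_disjoint)
qed

lemma S_id: assumes j: "1 \<le> j" "j \<le> k" and t: "\<alpha> (j+1) \<le> t" "t \<le> \<alpha> j"
  shows "(\<Sum>i=1..j. \<alpha> i - \<beta> i) = (\<Sum>i=1..d. h j t i)"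
proof -
  have jd: "j \<le> d" using j kd by simp
  have A1: "(\<Sum>i=1..j. max 0 (\<alpha> i - t)) = (\<Sum>i=1..j. \<alpha> i - t)"
  proof (rule sum.cong)
    fix i assume "i \<in> {1..j}"
    hence "\<alpha> j \<le> \<alpha> i" using mono[of i j] jd by auto
    thus "max 0 (\<alpha> i - t) = \<alpha> i - t" using t by simp
  qed simp
  have A2: "(\<Sum>i=j+1..d. max 0 (\<alpha> i - t)) = 0"
  proof (rule sum.neutral, rule ballI)
    fix i assume "i \<in> {j+1..d}"
    hence "\<alpha> i \<le> \<alpha> (j+1)" using mono[of "j+1" i] by auto
    thus "max 0 (\<alpha> i - t) = 0" using t by simp
  qed
  have A: "(\<Sum>i=1..d. max 0 (\<alpha> i - t)) = (\<Sum>i=1..j. \<alpha> i - t)"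
    using split_d[OF jd, of "\<lambda>i. max 0 (\<alpha> i - t)"] A1 A2 by simp
  have B: "(\<Sum>i=1..d. max 0 (\<beta> i - t)) = (\<Sum>i=1..d. max 0 (\<alpha> i - t))"
    by (rule perm_sum)
  have C1: "(\<Sum>i=1..j. \<alpha> i - \<beta> i) = (\<Sum>i=1..j. \<alpha> i - t) - (\<Sum>i=1..j. \<beta> i - t)"
    by (simp add: sum_subtractf)
  have C2: "(\<Sum>i=1..j. \<beta> i - t) = (\<Sum>i=1..j. max 0 (\<beta> i - t)) - (\<Sum>i=1..j. max 0 (t - \<beta> i))"
    by (simp add: sum_subtractf[symmetric]) (rule sum.cong, auto)
  have D1: "(\<Sum>i=1..j. h j t i) = (\<Sum>i=1..j. max 0 (t - \<beta> i))"
    by (rule sum.cong) (auto simp: h_def)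
  have D2: "(\<Sum>i=j+1..d. h j t i) = (\<Sum>i=j+1..d. max 0 (\<beta> i - t))"
    by (rule sum.cong) (auto simp: h_def)
  have D: "(\<Sum>i=1..d. h j t i) = (\<Sum>i=1..j. max 0 (t - \<beta> i)) + (\<Sum>i=j+1..d. max 0 (\<beta> i - t))"
    using split_d[OF jd, of "h j t"] D1 D2 by simp
  have E: "(\<Sum>i=1..d. max 0 (\<beta> i - t)) = (\<Sum>i=1..j. max 0 (\<beta> i - t)) + (\<Sum>i=j+1..d. max 0 (\<beta> i - t))"
    by (rule split_d[OF jd])
  show ?thesis using A B C1 C2 D E by linarith
qed

lemma main_sum: "4 * (\<Sum>j=1..k. c j * (\<Sum>i=1..j. \<alpha> i - \<beta> i)) = (\<Sum>i=1..d. P i)"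
proof -
  have "4 * (\<Sum>j=1..k. c j * (\<Sum>i=1..j. \<alpha> i - \<beta> i))
      = (\<Sum>j=1..k. 2 * c j * (\<Sum>i=1..d. h j (\<alpha> j) i) + 2 * c j * (\<Sum>i=1..d. h j (ap (j+1)) i))"
    unfolding sum_distrib_left[of 4]
  proof (rule sum.cong)
    fix j assume j: "j \<in> {1..k}"
    have jd: "j + 1 \<le> d" using j kd by simp
    have m: "\<alpha> (j+1) \<le> \<alpha> j" using mono[of j "j+1"] j jd by simp
    have s1: "(\<Sum>i=1..j. \<alpha> i - \<beta> i) = (\<Sum>i=1..d. h j (\<alpha> j) i)"
      using j m by (intro S_id) auto
    have "\<alpha> (j+1) \<le> ap (j+1) \<and> ap (j+1) \<le> \<alpha> j"
      using j m ak ak1 by (cases "j = k") (auto simp: ap_def)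
    hence s2: "(\<Sum>i=1..j. \<alpha> i - \<beta> i) = (\<Sum>i=1..d. h j (ap (j+1)) i)"
      using j by (intro S_id) auto
    show "4 * (c j * (\<Sum>i=1..j. \<alpha> i - \<beta> i)) =
      2 * c j * (\<Sum>i=1..d. h j (\<alpha> j) i) + 2 * c j * (\<Sum>i=1..d. h j (ap (j+1)) i)"
      using s1 s2 by simp
  qed simp
  also have "\<dots> = (\<Sum>j=1..k. \<Sum>i=1..d. 2 * c j * (h j (\<alpha> j) i + h j (ap (j+1)) i))"
    by (simp add: sum_distrib_left sum.distrib algebra_simps)
  also have "\<dots> = (\<Sum>i=1..d. P i)" unfolding P_def by (rule sum.swap)
  finally show ?thesis .
qed

lemma h_nonneg: "0 \<le> h j t i" by (simp add: h_def)

lemma P_down: assumes i: "1 \<le> i" shows "2 * (\<Sum>j=i..k. c j * max 0 (\<alpha> j - \<beta> i)) \<le> P i"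
proof -
  have "2 * (\<Sum>j=i..k. c j * max 0 (\<alpha> j - \<beta> i)) = (\<Sum>j\<in>{j\<in>{1..k}. i \<le> j}. 2 * c j * max 0 (\<alpha> j - \<beta> i))"
  proof -
    have "{j\<in>{1..k}. i \<le> j} = {i..k}" using i by auto
    thus ?thesis by (simp add: sum_distrib_left mult.assoc)
  qed
  also have "\<dots> = (\<Sum>j=1..k. if i \<le> j then 2 * c j * max 0 (\<alpha> j - \<beta> i) else 0)"
    by (rule sum.inter_filter) simp
  also have "\<dots> \<le> P i" unfolding P_def
  proof (rule sum_mono)
    fix j assume j: "j \<in> {1..k}"
    have cj: "0 \<le> 2 * c j" using c_nonneg j by simp
    show "(if i \<le> j then 2 * c j * max 0 (\<alpha> j - \<beta> i) else 0) \<le> 2 * c j * (h j (\<alpha> j) i + h j (ap (j+1)) i)"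
      using cj h_nonneg[of j "ap (j+1)" i] h_nonneg[of j "\<alpha> j" i]
      by (auto simp: h_def intro!: mult_left_mono)
  qed
  finally show ?thesis .
qed

lemma P_up: "2 * (\<Sum>j=1..min (i - 1) k. c j * max 0 (\<beta> i - ap (j+1))) \<le> P i"
proof -
  have "2 * (\<Sum>j=1..min (i - 1) k. c j * max 0 (\<beta> i - ap (j+1))) = (\<Sum>j\<in>{j\<in>{1..k}. \<not> i \<le> j}. 2 * c j * max 0 (\<beta> i - ap (j+1)))"
  proof -
    have "{j\<in>{1..k}. \<not> i \<le> j} = {1..min (i - 1) k}" by auto
    thus ?thesis by (simp add: sum_distrib_left mult.assoc)
  qed
  also have "\<dots> = (\<Sum>j=1..k. if \<not> i \<le> j then 2 * c j * max 0 (\<beta> i - ap (j+1)) else 0)"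
    by (rule sum.inter_filter) simp
  also have "\<dots> \<le> P i" unfolding P_def
  proof (rule sum_mono)
    fix j assume j: "j \<in> {1..k}"
    have cj: "0 \<le> 2 * c j" using c_nonneg j by simp
    show "(if \<not> i \<le> j then 2 * c j * max 0 (\<beta> i - ap (j+1)) else 0) \<le> 2 * c j * (h j (\<alpha> j) i + h j (ap (j+1)) i)"
      using cj h_nonneg[of j "ap (j+1)" i] h_nonneg[of j "\<alpha> j" i]
      by (auto simp: h_def intro!: mult_left_mono)
  qed
  finally show ?thesis .
qed

lemma P_nonneg: "0 \<le> P i"
  unfolding P_def using c_nonneg h_nonneg by (intro sum_nonneg mult_nonneg_nonneg add_nonneg_nonneg) auto

lemma down_tele: assumes i: "1 \<le> i" "i \<le> k" and x: "\<zeta> < x" "x \<le> \<alpha> i"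
  shows "(\<alpha> i - x)^2 / (2 * \<alpha> i) \<le> (\<Sum>j=i..k. c j * max 0 (\<alpha> j - x))"
proof -
  define u where "u j = max 0 (ap j - x)" for j
  have "(\<Sum>j=i..k. (u j^2 - u (j+1)^2) / (2 * \<alpha> i)) \<le> (\<Sum>j=i..k. c j * max 0 (\<alpha> j - x))"
  proof (rule sum_mono)
    fix j assume j: "j \<in> {i..k}"
    have apj: "ap j = \<alpha> j" using j by (simp add: ap_def)
    have "ap j \<le> \<alpha> i" using apj mono[of i j] j i kd by simp
    hence "((max 0 (ap j - x))^2 - (max 0 (ap (j+1) - x))^2) / (2 * \<alpha> i) \<le> (ap j - ap (j+1)) / ap j * max 0 (ap j - x)"
      using ap_pos[of "j+1"] ap_mono[of j] j i by (intro alg1) auto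
    thus "(u j^2 - u (j+1)^2) / (2 * \<alpha> i) \<le> c j * max 0 (\<alpha> j - x)"
      by (simp add: u_def c_def apj)
  qed
  moreover have "(\<Sum>j=i..k. (u j^2 - u (j+1)^2) / (2 * \<alpha> i)) = (u i^2 - u (k+1)^2) / (2 * \<alpha> i)"
    unfolding sum_divide_distrib[symmetric] using i by (subst telesc) auto
  moreover have "u i = \<alpha> i - x" "u (k+1) = 0" using i x by (auto simp: u_def ap_def)
  ultimately show ?thesis by simp
qed

lemma up_tele: assumes i: "1 \<le> i" "i \<le> d" and x: "\<zeta> < \<beta> i" "\<alpha> i < \<beta> i"
  shows "(\<beta> i - max (\<alpha> i) \<zeta>)^2 / (2 * \<beta> i) \<le> (\<Sum>j=1..min (i - 1) k. c j * max 0 (\<beta> i - ap (j+1)))"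
proof -
  define x where "x = \<beta> i"
  define m where "m = min (i - 1) k"
  define v where "v j = max 0 (x - ap j)" for j
  have xp: "0 < x" using x zpos by (simp add: x_def)
  have "(\<Sum>j=1..m. (- (v j^2) - (- (v (j+1)^2))) / (2 * x)) \<le> (\<Sum>j=1..m. c j * max 0 (x - ap (j+1)))"
  proof (rule sum_mono)
    fix j assume j: "j \<in> {1..m}"
    have "((max 0 (x - ap (j+1)))^2 - (max 0 (x - ap j))^2) / (2 * x) \<le> (ap j - ap (j+1)) / ap j * max 0 (x - ap (j+1))"
      using ap_pos[of "j+1"] ap_mono[of j] j xp by (intro alg2) auto
    thus "(- (v j^2) - (- (v (j+1)^2))) / (2 * x) \<le> c j * max 0 (x - ap (j+1))"
      by (simp add: v_def c_def)
  qed
  moreover have "(\<Sum>j=1..m. (- (v j^2) - (- (v (j+1)^2))) / (2 * x)) = (- (v 1^2) - (- (v (m+1)^2))) / (2 * x)"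
    unfolding sum_divide_distrib[symmetric] by (subst telesc[where F="\<lambda>j. - (v j^2)"]) auto
  moreover have "v 1 = 0" using b_le[OF i] k1 by (simp add: v_def x_def ap_def)
  moreover have "ap (m+1) = max (\<alpha> i) \<zeta>"
  proof (cases "i \<le> k")
    case True
    then have "m + 1 = i" using i by (simp add: m_def)
    thus ?thesis using True a_gt[of i] i by (simp add: ap_def)
  next
    case False
    then have "m = k" by (simp add: m_def)
    thus ?thesis using False a_le[of i] i by (simp add: ap_def)
  qed
  moreover have "v (m+1) = x - max (\<alpha> i) \<zeta>" using calculation(4) x by (simp add: v_def x_def)
  ultimately show ?thesis by (simp add: x_def m_def)
qed

definition f where "f t = (if \<zeta> < t then 2 * L * \<zeta> else 0)"

lemma f_nonneg: "0 \<le> f t" using L_nonneg zpos by (simp add: f_def)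

lemma item: assumes i: "1 \<le> i" "i \<le> d"
  shows "(sqrt (\<alpha> i) - sqrt (\<beta> i))^2 \<le> P i + \<zeta> + f (\<alpha> i) + f (\<beta> i)"
proof -
  define a where "a = \<alpha> i"
  define x where "x = \<beta> i"
  have a0: "0 \<le> a" "0 \<le> x" using a_nonneg[OF i] b_nonneg[OF i] by (auto simp: a_def x_def)
  have fp: "0 \<le> f a" "0 \<le> f x" "0 \<le> P i" using f_nonneg P_nonneg by auto
  consider "a \<le> \<zeta> \<and> x \<le> \<zeta>" | "\<zeta> < a \<and> x \<le> a" | "a < x \<and> \<zeta> < x" by linarith
  then have "(sqrt a - sqrt x)^2 \<le> P i + \<zeta> + f a + f x"
  proof cases
    case 1
    thus ?thesis using sq_le_max[OF a0(2) a0(1)] fp by linarith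
  next
    case 2
    hence ik: "i \<le> k" using a_gt_iff[OF i] by (simp add: a_def)
    have fa: "f a = 2 * L * \<zeta>" using 2 by (simp add: f_def)
    have P1: "2 * (\<Sum>j=i..k. c j * max 0 (\<alpha> j - x)) \<le> P i" using P_down[OF i(1)] by (simp add: x_def)
    show ?thesis
    proof (cases "x \<le> \<zeta>")
      case True
      have "(\<Sum>j=i..k. (ap j - ap (j+1)) - x * c j) \<le> (\<Sum>j=i..k. c j * max 0 (\<alpha> j - x))"
      proof (rule sum_mono)
        fix j assume j: "j \<in> {i..k}"
        have apj: "ap j = \<alpha> j" using j by (simp add: ap_def)
        have "c j * ap j = ap j - ap (j+1)" using ap_pos[of j] j i by (simp add: c_def)
        hence "(ap j - ap (j+1)) - x * c j = c j * (\<alpha> j - x)" by (simp add: apj algebra_simps)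
        also have "\<dots> \<le> c j * max 0 (\<alpha> j - x)" using c_nonneg[of j] j i by (intro mult_left_mono) auto
        finally show "(ap j - ap (j+1)) - x * c j \<le> c j * max 0 (\<alpha> j - x)" .
      qed
      moreover have "(\<Sum>j=i..k. (ap j - ap (j+1)) - x * c j) = (ap i - ap (k+1)) - x * (\<Sum>j=i..k. c j)"
      proof -
        have "(\<Sum>j=i..k. ap j - ap (j+1)) = ap i - ap (k+1)" using ik by (intro telesc) simp
        thus ?thesis by (simp only: sum_subtractf sum_distrib_left)
      qed
      moreover have "ap i - ap (k+1) = a - \<zeta>" using ik by (simp add: ap_def a_def)
      moreover have "x * (\<Sum>j=i..k. c j) \<le> \<zeta> * L"
        using True a0 sum_c_sub_le_L[OF i(1)] c_nonneg i(1) by (intro mult_mono sum_nonneg) auto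
      moreover have "(sqrt a - sqrt x)^2 \<le> a" using sq_le_a a0 2 by auto
      ultimately show ?thesis using P1 fa fp 2 by (simp add: algebra_simps)
    next
      case False
      have "(a - x)^2 / (2 * a) \<le> (\<Sum>j=i..k. c j * max 0 (\<alpha> j - x))"
        using down_tele[OF i(1) ik, of x] False 2 by (simp add: a_def)
      moreover have "2 * ((a - x)^2 / (2 * a)) = (a - x)^2 / a" by simp
      moreover have "(sqrt a - sqrt x)^2 \<le> (a - x)^2 / a" using sq_le_quot a0 2 zpos by auto
      ultimately show ?thesis using P1 fp zpos by linarith
    qed
  next
    case 3
    have P1: "(x - max a \<zeta>)^2 / x \<le> P i"
      using up_tele[OF i] P_up[of i] 3 by (simp add: a_def x_def)
    have fx: "f x = 2 * L * \<zeta>" using 3 by (simp add: f_def)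
    have xp: "0 < x" using 3 zpos by simp
    show ?thesis
    proof (cases "\<zeta> \<le> a")
      case True
      have "(sqrt x - sqrt a)^2 \<le> (x - a)^2 / x" using sq_le_quot a0 xp by auto
      hence "(sqrt a - sqrt x)^2 \<le> (x - a)^2 / x" by (simp add: power2_commute)
      thus ?thesis using P1 True fp zpos by (simp add: max_def)
    next
      case False
      have "(sqrt a - sqrt x)^2 \<le> x" using sq_le_max[OF a0(2) a0(1)] 3 by simp
      moreover have e: "x = (x - \<zeta>)^2 / x + \<zeta> + (x - \<zeta>) / x * \<zeta>"
        using xp by (simp add: field_simps power2_eq_square)
      moreover have "(x - \<zeta>) / x \<le> L"
      proof -
        have r: "(x - \<zeta>) / x = 1 - \<zeta> / x" using xp by (simp add: field_simps)
        have "(x - \<zeta>) / x \<le> 1" using xp zpos by (simp add: r)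
        hence 1: "(x - \<zeta>) / x \<le> real k" using k1 by linarith
        have "ln (\<zeta> / x) \<le> \<zeta> / x - 1" using xp zpos by (intro ln_le_minus_one) simp
        moreover have "ln (\<zeta> / x) = - ln (x / \<zeta>)" using xp zpos by (simp add: ln_div)
        moreover have "ln (x / \<zeta>) \<le> ln (\<alpha> 1 / \<zeta>)"
          using b_le[OF i] xp zpos by (simp add: x_def divide_right_mono)
        ultimately have "(x - \<zeta>) / x \<le> ln (\<alpha> 1 / \<zeta>)" using r by linarith
        thus ?thesis using 1 by (simp add: L_def)
      qed
      hence "(x - \<zeta>) / x * \<zeta> \<le> L * \<zeta>" using zpos by (intro mult_right_mono) auto
      moreover have "max a \<zeta> = \<zeta>" using False by simp
      moreover have "f x = 2 * (L * \<zeta>)" using fx by simp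
      moreover have "0 \<le> L * \<zeta>" using L_nonneg zpos by simp
      ultimately show ?thesis using P1 fp zpos by linarith
    qed
  qed
  thus ?thesis by (simp add: a_def x_def)
qed

lemma f_sum: "(\<Sum>i=1..d. f (\<alpha> i)) = real k * (2 * L * \<zeta>)"
proof -
  have kd': "k \<le> d" using kd by simp
  have "(\<Sum>i=1..k. f (\<alpha> i)) = (\<Sum>i=1..k. 2 * L * \<zeta>)"
    by (rule sum.cong) (auto simp: f_def a_gt)
  moreover have "(\<Sum>i=k+1..d. f (\<alpha> i)) = 0"
  proof (rule sum.neutral, rule ballI)
    fix i assume "i \<in> {k+1..d}"
    hence "\<alpha> i \<le> \<zeta>" using a_le by auto
    thus "f (\<alpha> i) = 0" by (simp add: f_def)
  qed
  ultimately show ?thesis using split_d[OF kd', of "\<lambda>i. f (\<alpha> i)"] by simp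
qed

lemma final:
  shows "(let \<alpha>' = (\<lambda>j. if j \<le> k then \<alpha> j else \<zeta>);
              L = min (real k) (ln (\<alpha> 1 / \<zeta>))
          in (\<Sum>i=1..d. (sqrt (\<alpha> i) - sqrt (\<beta> i))^2)
             \<le> 4 * (\<Sum>j=1..k. (\<alpha>' j - \<alpha>' (j + 1)) / \<alpha>' j * (\<Sum>i=1..j. \<alpha> i - \<beta> i))
               + real d * \<zeta> + 8 * real k * L * \<zeta>)"
proof -
  have e1: "(\<Sum>j=1..k. ((\<lambda>j. if j \<le> k then \<alpha> j else \<zeta>) j - (\<lambda>j. if j \<le> k then \<alpha> j else \<zeta>) (j + 1))
       / (\<lambda>j. if j \<le> k then \<alpha> j else \<zeta>) j * (\<Sum>i=1..j. \<alpha> i - \<beta> i))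
     = (\<Sum>j=1..k. c j * (\<Sum>i=1..j. \<alpha> i - \<beta> i))"
    unfolding c_def ap_def by simp
  have "(\<Sum>i=1..d. (sqrt (\<alpha> i) - sqrt (\<beta> i))^2) \<le> (\<Sum>i=1..d. P i + \<zeta> + f (\<alpha> i) + f (\<beta> i))"
    by (rule sum_mono) (use item in auto)
  also have "\<dots> = (\<Sum>i=1..d. P i) + real d * \<zeta> + real k * (2 * L * \<zeta>) + real k * (2 * L * \<zeta>)"
    using f_sum perm_sum[of f] by (simp add: sum.distrib)
  also have "\<dots> \<le> (\<Sum>i=1..d. P i) + real d * \<zeta> + 8 * real k * L * \<zeta>"
    using L_nonneg zpos by (simp add: algebra_simps)
  finally have "(\<Sum>i=1..d. (sqrt (\<alpha> i) - sqrt (\<beta> i))^2) \<le> 4 * (\<Sum>j=1..k. c j * (\<Sum>i=1..j. \<alpha> i - \<beta> i)) + real d * \<zeta> + 8 * real k * L * \<zeta>"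
    using main_sum by simp
  thus ?thesis unfolding Let_def e1 L_def .
qed

end

theorem mainTheorem16:
  fixes \<zeta> :: real and k d :: nat and \<alpha> \<beta> :: "nat \<Rightarrow> real" and \<sigma> :: "nat \<Rightarrow> nat"
  assumes "\<zeta> > 0" and "1 \<le> k" and "k < d"
    and "\<And>i j. 1 \<le> i \<Longrightarrow> i \<le> j \<Longrightarrow> j \<le> d \<Longrightarrow> \<alpha> j \<le> \<alpha> i"
    and "\<alpha> k > \<zeta>" and "\<zeta> \<ge> \<alpha> (k + 1)" and "\<alpha> d \<ge> 0"
    and "\<sigma> permutes {1..d}" and "\<And>i. \<beta> i = \<alpha> (\<sigma> i)"
  shows "(let \<alpha>' = (\<lambda>j. if j \<le> k then \<alpha> j else \<zeta>);
              L = min (real k) (ln (\<alpha> 1 / \<zeta>))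
          in (\<Sum>i=1..d. (sqrt (\<alpha> i) - sqrt (\<beta> i))^2)
             \<le> 4 * (\<Sum>j=1..k. (\<alpha>' j - \<alpha>' (j + 1)) / \<alpha>' j * (\<Sum>i=1..j. \<alpha> i - \<beta> i))
               + real d * \<zeta> + 8 * real k * L * \<zeta>)"
proof -
  interpret thm16 \<zeta> k d \<alpha> \<beta> \<sigma> using assms by unfold_locales auto
  show ?thesis by (rule final)
qed

end
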